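(* Assume the Nemytskii operator $\mathcal G(\boldsymbol\zeta)=\mathbf g(\cdot,\boldsymbol\zeta(\cdot))$ maps $L_t^2(\Gamma)$ into itself with $\|\mathcal G(\boldsymbol\zeta_1)-\mathcal G(\boldsymbol\zeta_2)\|_{L^2(\Gamma)}\le L_g\|\boldsymbol\zeta_1-\boldsymbol\zeta_2\|_{L^2(\Gamma)}$ for all $\boldsymbol\zeta_1,\boldsymbol\zeta_2\in L_t^2(\Gamma)$. If $C_{\rm tr}L_g<1$, then there is a unique $\mathbf E\in\mathbf X(\Omega)$ with $\mathcal A^{\rm tr}(\mathbf E;\mathbf V)=\langle\mathbf F^{\rm tr},\mathbf V\rangle$ for all $\mathbf V\in\mathbf X(\Omega)$, where $$\mathcal A^{\rm tr}(\mathbf E;\mathbf V)=\int_\Omega\big[\mu_r^{-1}(\nabla\times\mathbf E)\cdot(\nabla\times\overline{\mathbf V})-k^2\varepsilon_r\mathbf E\cdot\overline{\mathbf V}\big]d\boldsymbol x-\int_\Gamma\mathbf g(\cdot,\gamma_T\mathbf E)\cdot\gamma_T\overline{\mathbf V}\,ds+ik\langle\Lambda\gamma_t\mathbf E,\gamma_T\overline{\mathbf V}\rangle_{\Gamma_R}.$$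
   Context: Let $k>0$, $\varepsilon_0,\mu_0>0$, $\omega>0$. Let $D\subset\mathbb R^3$ be a bounded Lipschitz domain, $\Gamma=\partial D$, $\mathbf n$ the unit normal pointing out of $D$. Let $B_R$ be an open ball with $\overline D\subset B_R$, $\Gamma_R=\partial B_R$, and $\Omega=B_R$. $\mu_r=\mu_D/\mu_0$ in $D$, $=1$ outside; $\varepsilon_r=\varepsilon_0^{-1}(\varepsilon_D+i\sigma_D/\omega)$ in $D$, $=1$ outside, with $\mu_D,\varepsilon_D>0,\sigma_D\ge0$. Incident field $\mathbf E^i=\mathbf p e^{ik\mathbf d\cdot\boldsymbol x}$, $\mathbf d\in\mathbb S^2$, $\mathbf p\cdot\mathbf d=0$. $\gamma_t\mathbf u=\mathbf n\times\mathbf u$, $\gamma_T\mathbf u=\mathbf n\times(\mathbf u\times\mathbf n)$. $\Lambda$ is the electromagnetic Calderón operator on $\Gamma_R$ ($\Lambda\boldsymbol\xi=\gamma_t((ik)^{-1}\nabla\times\mathbf W)$ with $\mathbf W$ radiating solution of $\nabla\times\nabla\times\mathbf W-k^2\mathbf W=0$ outside $\overline{B_R}$, $\gamma_t\mathbf W=\boldsymbol\xi$), and $\langle\cdot,\cdot\rangle_{\Gamma_R}$ the $H^{-1/2}(\operatorname{div}_{\Gamma_R})$–$H^{-1/2}(\operatorname{curl}_{\Gamma_R})$ duality. $L_t^2(\Gamma)$: tangential $L^2$ fields. $\mathbf X(\Omega)=\{\mathbf E\in H(\operatorname{curl};\Omega):\gamma_T\mathbf E|_\Gamma\in L_t^2(\Gamma)\}$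 (the common tangential trace on $\Gamma$), with norm $\|\mathbf E\|^2_{H(\operatorname{curl})}+\|\gamma_T\mathbf E\|^2_{L^2(\Gamma)}$. $\langle\mathbf F^{\rm tr},\mathbf V\rangle=\langle ik\Lambda(\gamma_t\mathbf E^i)-\gamma_t(\nabla\times\mathbf E^i),\gamma_T\overline{\mathbf V}\rangle_{\Gamma_R}$. $\mathbf g:\Gamma\times\mathbb C^3\to\mathbb C^3$ Carathéodory and tangential. Standing fact: with $\langle\mathscr A_l^{\rm tr}\mathbf E,\mathbf V\rangle=\int_\Omega[\mu_r^{-1}(\nabla\times\mathbf E)\cdot(\nabla\times\overline{\mathbf V})-k^2\varepsilon_r\mathbf E\cdot\overline{\mathbf V}]d\boldsymbol x+ik\langle\Lambda\gamma_t\mathbf E,\gamma_T\overline{\mathbf V}\rangle_{\Gamma_R}$, for every $\mathbf f\in L_t^2(\Gamma)$ the problem $\langle\mathscr A^{\rm tr}_l\mathbf E,\mathbf V\rangle=\langle\mathbf F^{\rm tr},\mathbf V\rangle+\int_\Gamma\mathbf f\cdot\gamma_T\overline{\mathbf V}ds$ $\forall\mathbf V\in\mathbf X(\Omega)$ has a unique solution in $\mathbf X(\Omega)$, and solutions for data $\mathbf f_1,\mathbf f_2$ satisfy $\|\mathbf E_1-\mathbf E_2\|_{\mathbf X(\Omega)}\le C_{\rm tr}\|\mathbf f_1-\mathbf f_2\|_{L^2(\Gamma)}$. *)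

theory Defs
  imports "HOL-Analysis.Analysis"
begin

(* Abstract rendering of the setting.
   'x   : the space X(Omega)  (Banach, norm ||E||_X),
   'l   : the space L_t^2(Gamma),
   gT   : the tangential trace gamma_T : X(Omega) -> L_t^2(Gamma),
   Al   : the sesquilinear form <A_l^tr E, V>,
   Ftr  : the antilinear functional V |-> <F^tr, V>,
   bG   : the boundary pairing (f, eta) |-> int_Gamma f . conj eta ds,
   G    : the Nemytskii operator zeta |-> g(., zeta(.)). *)

definition A_tr ::
  "('x \<Rightarrow> 'x \<Rightarrow> complex) \<Rightarrow> ('l \<Rightarrow> 'l \<Rightarrow> complex) \<Rightarrow> ('l \<Rightarrow> 'l)
   \<Rightarrow> ('x \<Rightarrow> 'l) \<Rightarrow> 'x \<Rightarrow> 'x \<Rightarrow> complex" where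
  "A_tr Al bG G gT E V = Al E V - bG (G (gT E)) (gT V)"

end

theory Submission
  imports Defs
begin

lemma aux_scalar:
  fixes C L a b :: real
  assumes "a \<le> L * b" "0 \<le> a" "0 \<le> b"
  shows "C * a \<le> max 0 (C * L) * b"
proof (cases "C \<ge> 0")
  case True
  have "C * a \<le> C * (L * b)" using mult_left_mono[OF assms(1) True] .
  also have "\<dots> = (C * L) * b" by (simp add: mult.assoc)
  also have "\<dots> \<le> max 0 (C * L) * b" using assms(3) by (simp add: mult_right_mono)
  finally show ?thesis .
next
  case False
  then have "C * a \<le> 0" using assms(2) by (simp add: mult_nonpos_nonneg)
  also have "0 \<le> max 0 (C * L) * b" using assms(3) by simp
  finally show ?thesis .
qed

lemma aux_fix:
  fixes S :: "'x::banach \<Rightarrow> 'x" and c :: real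
  assumes "0 \<le> c" "c < 1" "\<And>x y. norm (S x - S y) \<le> c * norm (x - y)"
  shows "\<exists>!x. S x = x"
  by (rule banach_fix_type[OF assms(1,2)]) (simp add: dist_norm assms(3))

theorem corollary2p4:
  fixes Al :: "'x::banach \<Rightarrow> 'x \<Rightarrow> complex"
    and Ftr :: "'x \<Rightarrow> complex"
    and bG :: "'l::real_normed_vector \<Rightarrow> 'l \<Rightarrow> complex"
    and gT :: "'x \<Rightarrow> 'l"
    and G :: "'l \<Rightarrow> 'l"
    and C_tr L_g :: real
  assumes trace_linear: "linear gT"
    and trace_bound: "\<And>E. norm (gT E) \<le> norm E"
    and standing_exists_unique:
      "\<And>f. \<exists>!E. \<forall>V. Al E V = Ftr V + bG f (gT V)"
    and standing_stability:
      "\<And>f1 f2 E1 E2. (\<forall>V. Al E1 V = Ftr V + bG f1 (gT V)) \<Longrightarrow>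
                     (\<forall>V. Al E2 V = Ftr V + bG f2 (gT V)) \<Longrightarrow>
                     norm (E1 - E2) \<le> C_tr * norm (f1 - f2)"
    and G_lipschitz: "\<And>z1 z2. norm (G z1 - G z2) \<le> L_g * norm (z1 - z2)"
    and small: "C_tr * L_g < 1"
  shows "\<exists>!E. \<forall>V. A_tr Al bG G gT E V = Ftr V"
proof -
  define P where "P = (\<lambda>f E. \<forall>V. Al E V = Ftr V + bG f (gT V))"
  define S where "S = (\<lambda>E. THE E'. P (G (gT E)) E')"
  have PS: "P (G (gT E)) (S E)" for E
    unfolding S_def P_def using theI'[OF standing_exists_unique[of "G (gT E)"]] .
  have Puniq: "P f E1 \<Longrightarrow> P f E2 \<Longrightarrow> E1 = E2" for f E1 E2
    using standing_exists_unique[of f] unfolding P_def by blast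
  have c0: "0 \<le> max 0 (C_tr * L_g)" by simp
  have c1: "max 0 (C_tr * L_g) < 1" using small by simp
  have lip: "norm (S x - S y) \<le> max 0 (C_tr * L_g) * norm (x - y)" for x y
  proof -
    have st: "norm (S x - S y) \<le> C_tr * norm (G (gT x) - G (gT y))"
      by (rule standing_stability[OF PS[of x, unfolded P_def] PS[of y, unfolded P_def]])
    have tb: "norm (gT x - gT y) \<le> norm (x - y)"
      using trace_bound[of "x - y"] linear_diff[OF trace_linear] by simp
    have "C_tr * norm (G (gT x) - G (gT y)) \<le> max 0 (C_tr * L_g) * norm (gT x - gT y)"
      by (rule aux_scalar[OF G_lipschitz]) simp_all
    also have "\<dots> \<le> max 0 (C_tr * L_g) * norm (x - y)" by (rule mult_left_mono[OF tb c0])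
    finally have "C_tr * norm (G (gT x) - G (gT y)) \<le> max 0 (C_tr * L_g) * norm (x - y)" .
    with st show ?thesis by linarith
  qed
  have fixpt: "\<exists>!x. S x = x" by (rule aux_fix[OF c0 c1 lip])
  have eq: "(\<forall>V. A_tr Al bG G gT E V = Ftr V) \<longleftrightarrow> S E = E" for E
  proof
    assume "\<forall>V. A_tr Al bG G gT E V = Ftr V"
    then have "P (G (gT E)) E" unfolding P_def A_tr_def by (simp only: diff_eq_eq simp_thms)
    then show "S E = E" using Puniq PS by blast
  next
    assume "S E = E"
    then have "P (G (gT E)) E" using PS[of E] by (simp only:)
    then show "\<forall>V. A_tr Al bG G gT E V = Ftr V" unfolding P_def A_tr_def by (simp only: diff_eq_eq simp_thms)
  qed
  show ?thesis using fixpt eq by simp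
qed

end
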